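(* Let $X$ be a complete metric space and $\mathcal Z_{\mathcal S}=(X,(\phi_j)_{j=0}^{n-1},(\rho_j)_{j=0}^{n-1})$ a Matkowski contractive GIFZS of degree $m$ with a proper family $(\rho_j)$, and let $u_{\mathcal Z}$ be its fuzzy attractor. Let $I=\{j:\rho_j(1)=1\}$, $\mathcal S=(X,(\phi_j)_{j=0}^{n-1})$ and $\mathcal S'=(X,(\phi_j)_{j\in I})$. Then $[u_{\mathcal Z}]^0=A_{\mathcal S}$ and $[u_{\mathcal Z}]^1=A_{\mathcal S'}$.
   Context: A fuzzy subset of $X$ is $u:X\to[0,1]$. For $\alpha\in(0,1]$, $[u]^\alpha=\{x:u(x)\ge\alpha\}$, $[u]^0=\overline{\{x:u(x)>0\}}$. $\mathcal F_X^*$: fuzzy subsets that are normal, usc and compactly supported. $X^m$ has the maximum metric $d^m$. For $T:Z\to Y$, $T(u)(y)=\sup\{u(z):T(z)=y\}$ if $y\in T(Z)$, else $0$; $\rho(u)=\rho\circ u$; $(u_0\times\cdots\times u_{m-1})(x_0,\dots,x_{m-1})=\min_iu_i(x_i)$; $\vee$ is pointwise max. A family $(\rho_j)$ of maps $[0,1]\to[0,1]$ is admissible if each is nondecreasing, right continuous, $\rho_j(0)=0$, and $\rho_j(1)=1$ for some $j$. For each $j$: $r_+^j=\inf\{t:\rho_j(t)>0\}$ and $\beta_j(\alpha)=\inf\{t\in[0,1]:\rho_j(t)\ge\alpha\}$ for $\alpha\in[0,\rho_j(1)]$. An admissible family is proper if $r_+^j=0$ and $\beta_j(\rho_j(1))=1$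 for all $j$. A GIFS of degree $m$ is $(X,(\phi_j))$ with continuous $\phi_j:X^m\to X$; it is Matkowski contractive if each $\phi_j$ satisfies $d(\phi_j(x),\phi_j(y))\le\varphi_j(d^m(x,y))$ for some nondecreasing $\varphi_j$ with $\varphi_j^{(k)}(t)\to0$ for all $t>0$; on complete $X$ its attractor $A_{\mathcal S}$ is the unique nonempty compact $A$ with $A=\bigcup_j\phi_j(A\times\cdots\times A)$. The GIFZS operator is $\mathcal Z_{\mathcal S}(u_0,\dots,u_{m-1})=\bigvee_j\rho_j(\phi_j(u_0\times\cdots\times u_{m-1}))$ and the fuzzy attractor is the unique $u_{\mathcal Z}\in\mathcal F_X^*$ with $\mathcal Z_{\mathcal S}(u_{\mathcal Z},\dots,u_{\mathcal Z})=u_{\mathcal Z}$. *)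

theory Defs
  imports "HOL-Analysis.Analysis"
begin

text \<open>m-tuples of points of X are represented as extensional functions on {..<m}.\<close>
definition tuples :: "nat \<Rightarrow> 'a set \<Rightarrow> (nat \<Rightarrow> 'a) set" where
  "tuples m A = PiE {..<m} (\<lambda>_. A)"

definition dmax :: "nat \<Rightarrow> (nat \<Rightarrow> 'a::metric_space) \<Rightarrow> (nat \<Rightarrow> 'a) \<Rightarrow> real" where
  "dmax m x y = Max ((\<lambda>i. dist (x i) (y i)) ` {..<m})"

definition continuous_dmax :: "nat \<Rightarrow> ((nat \<Rightarrow> 'a::metric_space) \<Rightarrow> 'a) \<Rightarrow> bool" where
  "continuous_dmax m f \<longleftrightarrow> (\<forall>x\<in>tuples m UNIV. \<forall>e>0. \<exists>d>0. \<forall>y\<in>tuples m UNIV.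
       dmax m x y < d \<longrightarrow> dist (f x) (f y) < e)"

definition matkowski_contraction :: "nat \<Rightarrow> ((nat \<Rightarrow> 'a::metric_space) \<Rightarrow> 'a) \<Rightarrow> bool" where
  "matkowski_contraction m f \<longleftrightarrow> (\<exists>\<phi>::real \<Rightarrow> real. mono_on {0..} \<phi> \<and> (\<forall>t\<ge>0. \<phi> t \<ge> 0) \<and>
      (\<forall>t>0. (\<lambda>k. (\<phi> ^^ k) t) \<longlonglongrightarrow> 0) \<and>
      (\<forall>x\<in>tuples m UNIV. \<forall>y\<in>tuples m UNIV. dist (f x) (f y) \<le> \<phi> (dmax m x y)))"

definition gifs_attractor :: "nat \<Rightarrow> nat set \<Rightarrow> (nat \<Rightarrow> (nat \<Rightarrow> 'a::metric_space) \<Rightarrow> 'a) \<Rightarrow> 'a set" where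
  "gifs_attractor m J \<Phi> = (THE A. A \<noteq> {} \<and> compact A \<and> A = (\<Union>j\<in>J. \<Phi> j ` tuples m A))"

definition level :: "('a::topological_space \<Rightarrow> real) \<Rightarrow> real \<Rightarrow> 'a set" where
  "level u \<alpha> = (if \<alpha> = 0 then closure {x. u x > 0} else {x. u x \<ge> \<alpha>})"

definition usc :: "('a::topological_space \<Rightarrow> real) \<Rightarrow> bool" where
  "usc u \<longleftrightarrow> (\<forall>x. \<forall>e>0. \<forall>\<^sub>F y in at x. u y < u x + e)"

definition fuzzy_star :: "('a::topological_space \<Rightarrow> real) set" where
  "fuzzy_star = {u. (\<forall>x. 0 \<le> u x \<and> u x \<le> 1) \<and> (\<exists>x. u x = 1) \<and> usc u \<and> compact (level u 0)}"

definition zadeh_ext :: "'z set \<Rightarrow> ('z \<Rightarrow> 'y) \<Rightarrow> ('z \<Rightarrow> real) \<Rightarrow> 'y \<Rightarrow> real" where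
  "zadeh_ext Z T v y = (if y \<in> T ` Z then Sup {v z | z. z \<in> Z \<and> T z = y} else 0)"

definition fuzzy_prod :: "nat \<Rightarrow> (nat \<Rightarrow> 'a \<Rightarrow> real) \<Rightarrow> (nat \<Rightarrow> 'a) \<Rightarrow> real" where
  "fuzzy_prod m us x = Min ((\<lambda>i. us i (x i)) ` {..<m})"

definition gifzs_op :: "nat \<Rightarrow> nat \<Rightarrow> (nat \<Rightarrow> (nat \<Rightarrow> 'a) \<Rightarrow> 'a) \<Rightarrow> (nat \<Rightarrow> real \<Rightarrow> real)
     \<Rightarrow> (nat \<Rightarrow> 'a \<Rightarrow> real) \<Rightarrow> 'a \<Rightarrow> real" where
  "gifzs_op m n \<Phi> \<rho> us y = Max ((\<lambda>j. \<rho> j (zadeh_ext (tuples m UNIV) (\<Phi> j) (fuzzy_prod m us) y)) ` {..<n})"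

definition admissible :: "nat \<Rightarrow> (nat \<Rightarrow> real \<Rightarrow> real) \<Rightarrow> bool" where
  "admissible n \<rho> \<longleftrightarrow>
     (\<forall>j<n. (\<forall>t\<in>{0..1}. 0 \<le> \<rho> j t \<and> \<rho> j t \<le> 1) \<and> mono_on {0..1} (\<rho> j)
        \<and> (\<forall>t\<in>{0..<1}. (\<rho> j \<longlongrightarrow> \<rho> j t) (at_right t)) \<and> \<rho> j 0 = 0)
     \<and> (\<exists>j<n. \<rho> j 1 = 1)"

definition r_plus :: "(real \<Rightarrow> real) \<Rightarrow> real" where
  "r_plus \<rho> = Inf {t\<in>{0..1}. \<rho> t > 0}"

definition beta :: "(real \<Rightarrow> real) \<Rightarrow> real \<Rightarrow> real" where
  "beta \<rho> \<alpha> = Inf {t\<in>{0..1}. \<rho> t \<ge> \<alpha>}"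

definition proper_family :: "nat \<Rightarrow> (nat \<Rightarrow> real \<Rightarrow> real) \<Rightarrow> bool" where
  "proper_family n \<rho> \<longleftrightarrow> admissible n \<rho> \<and>
     (\<forall>j<n. r_plus (\<rho> j) = 0 \<and> beta (\<rho> j) (\<rho> j 1) = 1)"

end

theory Submission
  imports Defs
begin

lemma tuples_mem: "z \<in> tuples m A \<longleftrightarrow> (\<forall>i<m. z i \<in> A) \<and> (\<forall>i. i \<ge> m \<longrightarrow> z i = undefined)"
  unfolding tuples_def PiE_iff extensional_def by auto

lemma tuples_mono: "A \<subseteq> B \<Longrightarrow> tuples m A \<subseteq> tuples m B"
  unfolding tuples_def by (rule PiE_mono) auto

lemma dmax_le: "m \<ge> 1 \<Longrightarrow> dmax m x y \<le> t \<longleftrightarrow> (\<forall>i<m. dist (x i) (y i) \<le> t)"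
  unfolding dmax_def using lessThan_empty_iff[of m] by (subst Max_le_iff) auto

lemma dmax_nonneg: "m \<ge> 1 \<Longrightarrow> 0 \<le> dmax m x y"
  unfolding dmax_def using lessThan_empty_iff[of m] by (subst Max_ge_iff) auto

lemma dmax_less: "m \<ge> 1 \<Longrightarrow> dmax m x y < t \<longleftrightarrow> (\<forall>i<m. dist (x i) (y i) < t)"
  unfolding dmax_def using lessThan_empty_iff[of m] by (subst Max_less_iff) auto

lemma common_subseq:
  fixes z :: "nat \<Rightarrow> nat \<Rightarrow> 'a::metric_space"
  assumes K: "compact K" and zK: "\<And>k i. i < m \<Longrightarrow> z k i \<in> K"
  shows "\<exists>r w. strict_mono r \<and> w \<in> tuples m K \<and> (\<forall>i<m. (\<lambda>k. z (r k) i) \<longlonglongrightarrow> w i)"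
proof -
  have "\<forall>p\<le>m. \<exists>r. strict_mono r \<and> (\<forall>i<p. \<exists>l\<in>K. (\<lambda>k. z (r k) i) \<longlonglongrightarrow> l)"
  proof
    fix p show "p \<le> m \<longrightarrow> (\<exists>r. strict_mono r \<and> (\<forall>i<p. \<exists>l\<in>K. (\<lambda>k. z (r k) i) \<longlonglongrightarrow> l))"
    proof (induction p)
      case 0
      show ?case by (intro impI exI[of _ id]) (auto simp: strict_mono_def)
    next
      case (Suc p)
      show ?case
      proof
        assume "Suc p \<le> m"
        then obtain r where r: "strict_mono r" "\<forall>i<p. \<exists>l\<in>K. (\<lambda>k. z (r k) i) \<longlonglongrightarrow> l"
          using Suc by auto
        have "\<forall>k. z (r k) p \<in> K" using zK \<open>Suc p \<le> m\<close> by auto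
        then obtain l r' where l: "l \<in> K" "strict_mono r'" "((\<lambda>k. z (r k) p) \<circ> r') \<longlonglongrightarrow> l"
          using K unfolding compact_def by meson
        have "strict_mono (r \<circ> r')" using r(1) l(2) by (simp add: strict_mono_o)
        moreover have "\<forall>i<Suc p. \<exists>l\<in>K. (\<lambda>k. z ((r \<circ> r') k) i) \<longlonglongrightarrow> l"
        proof (intro allI impI)
          fix i assume "i < Suc p"
          show "\<exists>l\<in>K. (\<lambda>k. z ((r \<circ> r') k) i) \<longlonglongrightarrow> l"
          proof (cases "i = p")
            case True then show ?thesis using l by (auto simp: o_def)
          next
            case False
            then obtain l' where "l' \<in> K" "(\<lambda>k. z (r k) i) \<longlonglongrightarrow> l'" using r \<open>i < Suc p\<close> less_Suc_eq by blast
            then show ?thesis using LIMSEQ_subseq_LIMSEQ[OF _ l(2)] by (auto simp: o_def)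
          qed
        qed
        ultimately show "\<exists>r. strict_mono r \<and> (\<forall>i<Suc p. \<exists>l\<in>K. (\<lambda>k. z (r k) i) \<longlonglongrightarrow> l)" by blast
      qed
    qed
  qed
  then obtain r where r: "strict_mono r" "\<forall>i<m. \<exists>l\<in>K. (\<lambda>k. z (r k) i) \<longlonglongrightarrow> l" by auto
  then obtain g where g: "\<forall>i<m. g i \<in> K \<and> (\<lambda>k. z (r k) i) \<longlonglongrightarrow> g i" by metis
  define w where "w = (\<lambda>i. if i < m then g i else undefined)"
  have "w \<in> tuples m K" using g by (auto simp: tuples_mem w_def)
  moreover have "\<forall>i<m. (\<lambda>k. z (r k) i) \<longlonglongrightarrow> w i" using g by (auto simp: w_def)
  ultimately show ?thesis using r by blast
qed

lemma cont_seq: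
  fixes f :: "(nat \<Rightarrow> 'a::metric_space) \<Rightarrow> 'a"
  assumes m: "m \<ge> 1" and c: "continuous_dmax m f" and w: "w \<in> tuples m UNIV"
    and s: "\<And>k. s k \<in> tuples m UNIV" and lim: "\<forall>i<m. (\<lambda>k. s k i) \<longlonglongrightarrow> w i"
  shows "(\<lambda>k. f (s k)) \<longlonglongrightarrow> f w"
proof (rule tendstoI)
  fix e :: real assume "e > 0"
  then obtain d where d: "d > 0" "\<forall>y\<in>tuples m UNIV. dmax m w y < d \<longrightarrow> dist (f w) (f y) < e"
    using c w unfolding continuous_dmax_def by meson
  have "\<forall>i\<in>{..<m}. eventually (\<lambda>k. dist (w i) (s k i) < d) sequentially"
    using lim d(1) by (auto dest!: tendstoD simp: dist_commute)
  then have "eventually (\<lambda>k. \<forall>i\<in>{..<m}. dist (w i) (s k i) < d) sequentially"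
    by (rule eventually_ball_finite[rotated]) auto
  then show "eventually (\<lambda>k. dist (f (s k)) (f w) < e) sequentially"
  proof eventually_elim
    case (elim k)
    then have "dmax m w (s k) < d" using m by (simp add: dmax_less)
    then have "dist (f w) (f (s k)) < e" using d(2) s by blast
    then show ?case by (simp add: dist_commute)
  qed
qed

lemma compact_image_tuples:
  fixes f :: "(nat \<Rightarrow> 'a::metric_space) \<Rightarrow> 'a"
  assumes m: "m \<ge> 1" and c: "continuous_dmax m f" and K: "compact K"
  shows "compact (f ` tuples m K)"
  unfolding compact_def
proof (intro allI impI)
  fix g :: "nat \<Rightarrow> 'a" assume "\<forall>n. g n \<in> f ` tuples m K"
  then have "\<forall>n. \<exists>x. x \<in> tuples m K \<and> g n = f x" by blast
  then obtain z :: "nat \<Rightarrow> nat \<Rightarrow> 'a" where z0: "\<forall>n. z n \<in> tuples m K \<and> g n = f (z n)" by metis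
  then have z: "\<And>n. z n \<in> tuples m K" "\<And>n. g n = f (z n)" by auto
  obtain r :: "nat \<Rightarrow> nat" and w where r: "strict_mono r" "w \<in> tuples m K" "\<forall>i<m. (\<lambda>k. z (r k) i) \<longlonglongrightarrow> w i"
    using common_subseq[OF K, of m z] z(1) by (auto simp: tuples_mem)
  have "(\<lambda>k. f (z (r k))) \<longlonglongrightarrow> f w"
    by (rule cont_seq[OF m c]) (use r z tuples_mono[of K UNIV m] in auto)
  then show "\<exists>l\<in>f ` tuples m K. \<exists>r. strict_mono r \<and> (g \<circ> r) \<longlonglongrightarrow> l"
    using r z by (auto simp: o_def)
qed

lemma matk_less:
  assumes "matkowski_contraction m f"
  shows "\<exists>\<psi>. mono_on {0..} \<psi> \<and> (\<forall>t>0. \<psi> t < t) \<and>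
     (\<forall>x\<in>tuples m UNIV. \<forall>y\<in>tuples m UNIV. dist (f x) (f y) \<le> \<psi> (dmax m x y))"
proof -
  obtain \<phi> :: "real \<Rightarrow> real" where p: "mono_on {0..} \<phi>" "\<forall>t\<ge>0. \<phi> t \<ge> 0"
    "\<forall>t>0. (\<lambda>k. (\<phi> ^^ k) t) \<longlonglongrightarrow> 0"
    "\<forall>x\<in>tuples m UNIV. \<forall>y\<in>tuples m UNIV. dist (f x) (f y) \<le> \<phi> (dmax m x y)"
    using assms unfolding matkowski_contraction_def by blast
  have "\<phi> t < t" if t: "t > 0" for t
  proof (rule ccontr)
    assume "\<not> \<phi> t < t"
    then have ge: "\<phi> t \<ge> t" by simp
    have "\<forall>k. (\<phi> ^^ k) t \<ge> t"
    proof
      fix k show "(\<phi> ^^ k) t \<ge> t"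
      proof (induction k)
        case 0 then show ?case by simp
      next
        case (Suc k)
        have "\<phi> t \<le> \<phi> ((\<phi> ^^ k) t)"
          using p(1) Suc t by (auto intro: mono_onD)
        then show ?case using ge by simp
      qed
    qed
    then have "t \<le> 0" using LIMSEQ_le_const[OF p(3)[rule_format, OF t]] by auto
    then show False using t by simp
  qed
  then show ?thesis using p by blast
qed

lemma attr_step:
  fixes \<Phi> :: "nat \<Rightarrow> (nat \<Rightarrow> 'a::metric_space) \<Rightarrow> 'a"
  assumes m: "m \<ge> 1" and t: "t \<ge> 0"
    and \<Psi>: "\<forall>j\<in>J. mono_on {0..} (\<Psi> j) \<and>
       (\<forall>x\<in>tuples m UNIV. \<forall>y\<in>tuples m UNIV. dist (\<Phi> j x) (\<Phi> j y) \<le> \<Psi> j (dmax m x y))"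
    and C: "C = (\<Union>j\<in>J. \<Phi> j ` tuples m C)"
    and D: "compact D" "D \<noteq> {}" "D = (\<Union>j\<in>J. \<Phi> j ` tuples m D)"
    and ct: "\<forall>c\<in>C. infdist c D \<le> t"
    and c: "c \<in> C"
  shows "\<exists>j\<in>J. infdist c D \<le> \<Psi> j t"
proof -
  obtain j x where j: "j \<in> J" "x \<in> tuples m C" "c = \<Phi> j x" using C c by blast
  have "\<forall>i<m. \<exists>b\<in>D. dist (x i) b \<le> t"
  proof (intro allI impI)
    fix i assume "i < m"
    then have xi: "x i \<in> C" using j(2) by (auto simp: tuples_mem)
    obtain b where b: "b \<in> D" "\<forall>b'\<in>D. dist (x i) b \<le> dist (x i) b'"
      using continuous_attains_inf[OF D(1) D(2), of "\<lambda>b. dist (x i) b"]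
        continuous_on_dist[OF continuous_on_const continuous_on_id, of D "x i"]
      by auto
    have "dist (x i) b \<le> infdist (x i) D"
      unfolding infdist_def using D(2) b(2) by (auto intro: cINF_greatest)
    then show "\<exists>b\<in>D. dist (x i) b \<le> t" using b(1) ct xi by force
  qed
  then obtain yy where yy: "\<forall>i<m. yy i \<in> D \<and> dist (x i) (yy i) \<le> t" by metis
  define y where "y = (\<lambda>i. if i < m then yy i else undefined)"
  have y: "y \<in> tuples m D" using yy by (auto simp: y_def tuples_mem)
  have xT: "x \<in> tuples m UNIV" "y \<in> tuples m UNIV" using j(2) y tuples_mono[of _ UNIV m] by auto
  have "dmax m x y \<le> t" using yy m by (simp add: dmax_le y_def)
  then have "\<Psi> j (dmax m x y) \<le> \<Psi> j t"
  proof -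
    have "mono_on {0..} (\<Psi> j)" using \<Psi> j(1) by blast
    then show ?thesis using \<open>dmax m x y \<le> t\<close> dmax_nonneg[OF m, of x y] t
      by (auto intro: mono_onD)
  qed
  moreover have "dist (\<Phi> j x) (\<Phi> j y) \<le> \<Psi> j (dmax m x y)" using \<Psi> j(1) xT by blast
  moreover have "\<Phi> j y \<in> D" using D(3) y j(1) by blast
  ultimately have "infdist c D \<le> \<Psi> j t" using j(3) infdist_le[of "\<Phi> j y" D c] by force
  then show ?thesis using j(1) by blast
qed

lemma attr_unique:
  fixes \<Phi> :: "nat \<Rightarrow> (nat \<Rightarrow> 'a::metric_space) \<Rightarrow> 'a"
  assumes m: "m \<ge> 1" and M: "\<forall>j\<in>J. matkowski_contraction m (\<Phi> j)"
    and A: "compact A" "A \<noteq> {}" "A = (\<Union>j\<in>J. \<Phi> j ` tuples m A)"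
    and B: "compact B" "B \<noteq> {}" "B = (\<Union>j\<in>J. \<Phi> j ` tuples m B)"
  shows "A = B"
proof -
  have "\<forall>j\<in>J. \<exists>\<psi>. mono_on {0..} \<psi> \<and> (\<forall>t>0. \<psi> t < t) \<and>
     (\<forall>x\<in>tuples m UNIV. \<forall>y\<in>tuples m UNIV. dist (\<Phi> j x) (\<Phi> j y) \<le> \<psi> (dmax m x y))"
    using M matk_less by blast
  then obtain \<Psi> where \<Psi>: "\<forall>j\<in>J. mono_on {0..} (\<Psi> j) \<and> (\<forall>t>0. \<Psi> j t < t) \<and>
     (\<forall>x\<in>tuples m UNIV. \<forall>y\<in>tuples m UNIV. dist (\<Phi> j x) (\<Phi> j y) \<le> \<Psi> j (dmax m x y))"
    by metis
  obtain a0 where a0: "a0 \<in> A" "\<forall>a\<in>A. infdist a B \<le> infdist a0 B"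
    using continuous_attains_sup[OF A(1) A(2), of "\<lambda>a. infdist a B"]
      continuous_at_imp_continuous_on[of A "\<lambda>a. infdist a B"]
      continuous_infdist[OF continuous_ident]
    by auto
  obtain b0 where b0: "b0 \<in> B" "\<forall>b\<in>B. infdist b A \<le> infdist b0 A"
    using continuous_attains_sup[OF B(1) B(2), of "\<lambda>b. infdist b A"]
      continuous_at_imp_continuous_on[of B "\<lambda>b. infdist b A"]
      continuous_infdist[OF continuous_ident]
    by auto
  define t where "t = max (infdist a0 B) (infdist b0 A)"
  have t0: "t \<ge> 0" unfolding t_def by (simp add: infdist_nonneg le_max_iff_disj)
  have \<Psi>': "\<forall>j\<in>J. mono_on {0..} (\<Psi> j) \<and>
       (\<forall>x\<in>tuples m UNIV. \<forall>y\<in>tuples m UNIV. dist (\<Phi> j x) (\<Phi> j y) \<le> \<Psi> j (dmax m x y))"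
    using \<Psi> by blast
  have "t \<le> 0"
  proof (rule ccontr)
    assume "\<not> t \<le> 0"
    then have tp: "t > 0" by simp
    obtain j where j: "j \<in> J" "infdist a0 B \<le> \<Psi> j t"
      using attr_step[OF m t0 \<Psi>' A(3) B(1,2,3) _ a0(1)] a0(2) t_def by fastforce
    obtain j' where j': "j' \<in> J" "infdist b0 A \<le> \<Psi> j' t"
      using attr_step[OF m t0 \<Psi>' B(3) A(1,2,3) _ b0(1)] b0(2) t_def by fastforce
    have "\<Psi> j t < t" "\<Psi> j' t < t" using \<Psi> j(1) j'(1) tp by auto
    then have "t < t" using j j' unfolding t_def by linarith
    then show False by simp
  qed
  have AB: "A \<subseteq> B"
  proof
    fix a assume "a \<in> A"
    then have "infdist a B = 0" using a0(2) \<open>t \<le> 0\<close> infdist_nonneg[of a B] t_def by fastforce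
    then show "a \<in> B" using in_closed_iff_infdist_zero[OF compact_imp_closed[OF B(1)] B(2)] by blast
  qed
  have BA: "B \<subseteq> A"
  proof
    fix b assume "b \<in> B"
    then have "infdist b A = 0" using b0(2) \<open>t \<le> 0\<close> infdist_nonneg[of b A] t_def by fastforce
    then show "b \<in> A" using in_closed_iff_infdist_zero[OF compact_imp_closed[OF A(1)] A(2)] by blast
  qed
  show ?thesis using AB BA by blast
qed

lemma attr_eq:
  fixes \<Phi> :: "nat \<Rightarrow> (nat \<Rightarrow> 'a::metric_space) \<Rightarrow> 'a"
  assumes m: "m \<ge> 1" and M: "\<forall>j\<in>J. matkowski_contraction m (\<Phi> j)"
    and A: "compact A" "A \<noteq> {}" "A = (\<Union>j\<in>J. \<Phi> j ` tuples m A)"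
  shows "gifs_attractor m J \<Phi> = A"
  unfolding gifs_attractor_def
  by (rule the_equality) (use A attr_unique[OF m M] in blast)+

lemma prod_gt: "m \<ge> 1 \<Longrightarrow> fuzzy_prod m (\<lambda>_. u) z > a \<longleftrightarrow> (\<forall>i<m. u (z i) > a)"
  unfolding fuzzy_prod_def using lessThan_empty_iff[of m] by (subst Min_gr_iff) auto

lemma prod_ge: "m \<ge> 1 \<Longrightarrow> fuzzy_prod m (\<lambda>_. u) z \<ge> a \<longleftrightarrow> (\<forall>i<m. u (z i) \<ge> a)"
  unfolding fuzzy_prod_def using lessThan_empty_iff[of m] by (subst Min_ge_iff) auto

lemma prod_le1: assumes "m \<ge> 1" "\<forall>x. u x \<le> 1" shows "fuzzy_prod m (\<lambda>_. u) z \<le> 1"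
proof -
  have "0 \<in> {..<m}" using \<open>m \<ge> 1\<close> by simp
  then have "Min ((\<lambda>i. u (z i)) ` {..<m}) \<le> u (z 0)" by (intro Min_le) auto
  then show ?thesis using \<open>\<forall>x. u x \<le> 1\<close> unfolding fuzzy_prod_def by (meson order_trans)
qed

lemma zadeh_gt:
  fixes P :: "'z \<Rightarrow> real"
  assumes P: "\<forall>z\<in>T. P z \<le> 1" and a: "a \<ge> 0"
  shows "zadeh_ext T f P y > a \<longleftrightarrow> (\<exists>z\<in>T. f z = y \<and> P z > a)"
proof (cases "y \<in> f ` T")
  case True
  let ?V = "{P z | z. z \<in> T \<and> f z = y}"
  have "?V \<noteq> {}" using True by auto
  moreover have "bdd_above ?V" using P by (auto intro: bdd_aboveI[of _ 1])
  ultimately have "a < Sup ?V \<longleftrightarrow> (\<exists>x\<in>?V. a < x)" by (rule less_cSup_iff)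
  then show ?thesis unfolding zadeh_ext_def using True by auto
next
  case False
  then show ?thesis unfolding zadeh_ext_def using a by auto
qed

lemma zadeh_ge:
  fixes P :: "'z \<Rightarrow> real"
  assumes P: "\<forall>z\<in>T. P z \<le> 1" and z: "z \<in> T" "f z = y"
  shows "P z \<le> zadeh_ext T f P y"
proof -
  let ?V = "{P z | z. z \<in> T \<and> f z = y}"
  have "bdd_above ?V" using P by (auto intro: bdd_aboveI[of _ 1])
  moreover have "P z \<in> ?V" using z by auto
  ultimately show ?thesis unfolding zadeh_ext_def using z by (auto intro: cSup_upper)
qed

lemma zadeh_bounds:
  fixes P :: "'z \<Rightarrow> real"
  assumes P: "\<forall>z\<in>T. 0 \<le> P z \<and> P z \<le> 1"
  shows "0 \<le> zadeh_ext T f P y \<and> zadeh_ext T f P y \<le> 1"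
proof (cases "y \<in> f ` T")
  case True
  let ?V = "{P z | z. z \<in> T \<and> f z = y}"
  have ne: "?V \<noteq> {}" using True by auto
  moreover have "bdd_above ?V" using P by (auto intro: bdd_aboveI[of _ 1])
  ultimately have "0 \<le> Sup ?V" using P by (auto intro: cSup_upper2)
  moreover have "Sup ?V \<le> 1" using ne P by (auto intro: cSup_least)
  ultimately show ?thesis unfolding zadeh_ext_def using True by auto
next
  case False
  then show ?thesis unfolding zadeh_ext_def by auto
qed

lemma rho_pos:
  assumes pr: "proper_family n \<rho>" and j: "j < n" and t: "0 < t" "t \<le> 1"
  shows "\<rho> j t > 0"
proof (rule ccontr)
  assume "\<not> \<rho> j t > 0"
  then have le: "\<rho> j t \<le> 0" by simp
  have ad: "\<forall>t\<in>{0..1}. 0 \<le> \<rho> j t \<and> \<rho> j t \<le> 1" "mono_on {0..1} (\<rho> j)"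
    "r_plus (\<rho> j) = 0" "beta (\<rho> j) (\<rho> j 1) = 1"
    using pr j unfolding proper_family_def admissible_def by auto
  let ?S = "{s\<in>{0..1}. \<rho> j s > 0}"
  have sub: "s > t" if "s \<in> ?S" for s
  proof (rule ccontr)
    assume "\<not> s > t"
    then have "\<rho> j s \<le> \<rho> j t" using that t by (intro mono_onD[OF ad(2)]) auto
    then show False using le that by auto
  qed
  show False
  proof (cases "?S = {}")
    case True
    then have "\<rho> j 1 \<le> 0" by auto
    then have "\<rho> j 1 = 0" using ad(1)[rule_format, of 1] by simp
    then have "{s\<in>{0..1}. \<rho> j s \<ge> \<rho> j 1} = {0..1}" using ad(1) by auto
    then have "beta (\<rho> j) (\<rho> j 1) = 0" unfolding beta_def by simp
    then show False using ad(4) by simp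
  next
    case False
    then have "t \<le> Inf ?S" using sub by (intro cInf_greatest) (auto intro: less_imp_le)
    then show False using ad(3) t unfolding r_plus_def by simp
  qed
qed

lemma rho_lt1:
  assumes pr: "proper_family n \<rho>" and j: "j < n" and t: "0 \<le> t" "t < 1"
  shows "\<rho> j t < \<rho> j 1"
proof (rule ccontr)
  assume "\<not> \<rho> j t < \<rho> j 1"
  then have ge: "\<rho> j t \<ge> \<rho> j 1" by simp
  have "beta (\<rho> j) (\<rho> j 1) = 1" using pr j unfolding proper_family_def by auto
  moreover have "Inf {s\<in>{0..1}. \<rho> j s \<ge> \<rho> j 1} \<le> t"
    using ge t by (intro cInf_lower) (auto intro: bdd_belowI[of _ 0])
  ultimately show False using t unfolding beta_def by simp
qed

lemma usc_closed:
  fixes u :: "'a::topological_space \<Rightarrow> real"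
  assumes "usc u" shows "closed {x. u x \<ge> a}"
proof -
  have "open {x. u x < a}"
  proof (rule iffD2[OF open_subopen], rule ballI)
    fix x assume x: "x \<in> {x. u x < a}"
    then have e: "a - u x > 0" by simp
    have "\<forall>\<^sub>F y in at x. u y < u x + (a - u x)"
      using assms e unfolding usc_def by blast
    then have "\<forall>\<^sub>F y in at x. u y < a" by simp
    then obtain S where S: "open S" "x \<in> S" "\<And>y. y \<in> S \<Longrightarrow> y \<noteq> x \<Longrightarrow> u y < a"
      unfolding eventually_at_topological by auto
    have "S \<subseteq> {x. u x < a}" using S(3) x by auto
    then show "\<exists>T. open T \<and> x \<in> T \<and> T \<subseteq> {x. u x < a}" using S(1,2) by blast
  qed
  moreover have "{x. u x \<ge> a} = - {x. u x < a}" by auto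
  ultimately show ?thesis by (simp add: closed_def)
qed

theorem mainTheorem17:
  fixes m n :: nat
    and \<Phi> :: "nat \<Rightarrow> (nat \<Rightarrow> 'a::complete_space) \<Rightarrow> 'a"
    and \<rho> :: "nat \<Rightarrow> real \<Rightarrow> real"
    and u :: "'a \<Rightarrow> real"
  assumes "m \<ge> 1"
    and "\<forall>j<n. continuous_dmax m (\<Phi> j)"
    and "\<forall>j<n. matkowski_contraction m (\<Phi> j)"
    and "proper_family n \<rho>"
    and "u \<in> fuzzy_star"
    and "gifzs_op m n \<Phi> \<rho> (\<lambda>_. u) = u"
  shows "level u 0 = gifs_attractor m {..<n} \<Phi> \<and>
         level u 1 = gifs_attractor m {j. j < n \<and> \<rho> j 1 = 1} \<Phi>"
proof -
  note m = assms(1) and cont = assms(2) and matk = assms(3) and pr = assms(4)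
  have u01: "\<forall>x. 0 \<le> u x \<and> u x \<le> 1" and unorm: "\<exists>x. u x = 1" and us: "usc u"
    and K0c: "compact (level u 0)"
    using assms(5) unfolding fuzzy_star_def by auto
  define P where "P = fuzzy_prod m (\<lambda>_. u)"
  define Z where "Z j y = zadeh_ext (tuples m UNIV) (\<Phi> j) P y" for j y
  have ueq: "u y = Max ((\<lambda>j. \<rho> j (Z j y)) ` {..<n})" for y
    using fun_cong[OF assms(6), of y] unfolding gifzs_op_def Z_def P_def by simp
  have ad: "admissible n \<rho>" using pr unfolding proper_family_def by simp
  then have n1: "n \<ge> 1" unfolding admissible_def by auto
  have rb: "\<And>j t. j < n \<Longrightarrow> t \<in> {0..1} \<Longrightarrow> 0 \<le> \<rho> j t \<and> \<rho> j t \<le> 1"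
    and r0: "\<And>j. j < n \<Longrightarrow> \<rho> j 0 = 0"
    using ad unfolding admissible_def by auto
  have Pb: "\<forall>z\<in>tuples m UNIV. 0 \<le> P z \<and> P z \<le> 1"
    using prod_ge[OF m, of 0 u] prod_le1[OF m, of u] u01 unfolding P_def by auto
  have Pb1: "\<forall>z\<in>tuples m UNIV. P z \<le> 1" using Pb by blast
  have Zb: "0 \<le> Z j y \<and> Z j y \<le> 1" for j y
    unfolding Z_def by (rule zadeh_bounds[OF Pb])
  have fin: "finite ((\<lambda>j. \<rho> j (Z j y)) ` {..<n})" "(\<lambda>j. \<rho> j (Z j y)) ` {..<n} \<noteq> {}" for y
    using n1 lessThan_empty_iff[of n] by auto
  have rZpos: "\<rho> j (Z j y) > 0 \<longleftrightarrow> Z j y > 0" if j: "j < n" for j y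
  proof (cases "Z j y > 0")
    case True then show ?thesis using rho_pos[OF pr j, of "Z j y"] Zb[of j y] by simp
  next
    case False then have "Z j y = 0" using Zb[of j y] by simp
    then show ?thesis using r0[OF j] by simp
  qed
  have pos_iff: "u y > 0 \<longleftrightarrow> (\<exists>j<n. \<exists>z\<in>tuples m {x. u x > 0}. \<Phi> j z = y)" for y
  proof -
    have "u y > 0 \<longleftrightarrow> (\<exists>j<n. \<rho> j (Z j y) > 0)"
      unfolding ueq[of y] using fin[of y] by (subst Max_gr_iff) auto
    also have "\<dots> \<longleftrightarrow> (\<exists>j<n. Z j y > 0)" using rZpos by blast
    also have "\<dots> \<longleftrightarrow> (\<exists>j<n. \<exists>z\<in>tuples m UNIV. \<Phi> j z = y \<and> P z > 0)"
      unfolding Z_def by (simp add: zadeh_gt[OF Pb1 order.refl])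
    also have "\<dots> \<longleftrightarrow> (\<exists>j<n. \<exists>z\<in>tuples m {x. u x > 0}. \<Phi> j z = y)"
    proof -
      have "\<And>z. (z \<in> tuples m UNIV \<and> (\<forall>i<m. 0 < u (z i))) \<longleftrightarrow> z \<in> tuples m {x. u x > 0}"
        by (auto simp: tuples_mem)
      then show ?thesis unfolding P_def prod_gt[OF m] by blast
    qed
    finally show ?thesis .
  qed
  have one_iff: "u y \<ge> 1 \<longleftrightarrow> (\<exists>j<n. \<rho> j 1 = 1 \<and> Z j y \<ge> 1)" for y
  proof
    assume "u y \<ge> 1"
    then obtain j where j: "j < n" "\<rho> j (Z j y) \<ge> 1"
      unfolding ueq[of y] using fin[of y] by (subst (asm) Max_ge_iff) auto
    have "Z j y \<ge> 1"
    proof (rule ccontr)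
      assume "\<not> Z j y \<ge> 1"
      then have "\<rho> j (Z j y) < \<rho> j 1" using rho_lt1[OF pr j(1)] Zb[of j y] by simp
      moreover have "\<rho> j 1 \<le> 1" using rb[OF j(1), of 1] by simp
      ultimately show False using j(2) by simp
    qed
    then have "Z j y = 1" using Zb[of j y] by simp
    then have "\<rho> j 1 = 1" using j rb[OF j(1), of 1] by simp
    then show "\<exists>j<n. \<rho> j 1 = 1 \<and> Z j y \<ge> 1" using j(1) \<open>Z j y \<ge> 1\<close> by blast
  next
    assume "\<exists>j<n. \<rho> j 1 = 1 \<and> Z j y \<ge> 1"
    then obtain j where j: "j < n" "\<rho> j 1 = 1" "Z j y \<ge> 1" by blast
    then have "Z j y = 1" using Zb[of j y] by simp
    then have "\<rho> j (Z j y) \<ge> 1" using j by simp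
    then show "u y \<ge> 1" unfolding ueq[of y] using fin[of y] j(1) by (subst Max_ge_iff) auto
  qed
  define S0 where "S0 = {x. u x > 0}"
  define K0 where "K0 = closure S0"
  define L1 where "L1 = {x. u x \<ge> 1}"
  define I where "I = {j. j < n \<and> \<rho> j 1 = 1}"
  have K0l: "level u 0 = K0" unfolding level_def K0_def S0_def by simp
  have L1l: "level u 1 = L1" unfolding level_def L1_def by simp
  have K0c': "compact K0" using K0c K0l by simp
  have S0K0: "S0 \<subseteq> K0" unfolding K0_def by (rule closure_subset)
  obtain x1 where x1: "u x1 = 1" using unorm by blast
  have S0eq: "S0 = (\<Union>j\<in>{..<n}. \<Phi> j ` tuples m S0)"
  proof (rule set_eqI)
    fix y
    have "y \<in> (\<Union>j\<in>{..<n}. \<Phi> j ` tuples m S0) \<longleftrightarrow> (\<exists>j<n. \<exists>z\<in>tuples m S0. \<Phi> j z = y)"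
      by blast
    then show "y \<in> S0 \<longleftrightarrow> y \<in> (\<Union>j\<in>{..<n}. \<Phi> j ` tuples m S0)"
      using pos_iff[of y] unfolding S0_def by simp
  qed
  have K0eq: "K0 = (\<Union>j\<in>{..<n}. \<Phi> j ` tuples m K0)"
  proof
    have "closed (\<Union>j\<in>{..<n}. \<Phi> j ` tuples m K0)"
      using compact_image_tuples[OF m _ K0c'] cont by (intro closed_UN compact_imp_closed) auto
    moreover have "S0 \<subseteq> (\<Union>j\<in>{..<n}. \<Phi> j ` tuples m K0)"
      using S0eq tuples_mono[OF S0K0, of m] by blast
    ultimately show "K0 \<subseteq> (\<Union>j\<in>{..<n}. \<Phi> j ` tuples m K0)"
      unfolding K0_def by (rule closure_minimal[rotated])
  next
    show "(\<Union>j\<in>{..<n}. \<Phi> j ` tuples m K0) \<subseteq> K0"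
    proof clarify
      fix j z assume j: "j < n" and z: "z \<in> tuples m K0"
      have "\<forall>i. i < m \<longrightarrow> (\<exists>x. (\<forall>k. x k \<in> S0) \<and> x \<longlonglongrightarrow> z i)"
        using z unfolding tuples_mem K0_def closure_sequential by blast
      then obtain sq where sq: "\<forall>i. i < m \<longrightarrow> (\<forall>k. sq i k \<in> S0) \<and> sq i \<longlonglongrightarrow> z i" by metis
      define s where "s k = (\<lambda>i. if i < m then sq i k else undefined)" for k
      have s: "s k \<in> tuples m S0" for k using sq by (auto simp: s_def tuples_mem)
      have "\<Phi> j (s k) \<in> S0" for k using S0eq s j by blast
      moreover have "(\<lambda>k. \<Phi> j (s k)) \<longlonglongrightarrow> \<Phi> j z"
        by (rule cont_seq[OF m, of "\<Phi> j"]) (use cont j z s sq in \<open>auto simp: s_def tuples_mem\<close>)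
      ultimately show "\<Phi> j z \<in> K0" unfolding K0_def closure_sequential
        by (intro exI[of _ "\<lambda>k. \<Phi> j (s k)"]) auto
    qed
  qed
  have L1K0: "L1 \<subseteq> K0" using S0K0 unfolding L1_def S0_def by auto
  have L1c: "compact L1"
  proof -
    have "L1 = K0 \<inter> L1" using L1K0 by blast
    then show ?thesis using compact_Int_closed[OF K0c' usc_closed[OF us, of 1]] L1_def by simp
  qed
  have L1sup: "\<Phi> j z \<in> L1" if j: "j \<in> I" and z: "z \<in> tuples m L1" for j z
  proof -
    have zT: "z \<in> tuples m UNIV" using z tuples_mono[of L1 UNIV m] by auto
    have "P z \<ge> 1" using z unfolding P_def prod_ge[OF m] tuples_mem L1_def by auto
    then have "Z j (\<Phi> j z) \<ge> 1" unfolding Z_def using zadeh_ge[OF Pb1 zT, of "\<Phi> j"] by simp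
    then show ?thesis using one_iff j unfolding I_def L1_def by auto
  qed
  have L1sub: "\<exists>j\<in>I. \<exists>w\<in>tuples m L1. \<Phi> j w = y" if y: "y \<in> L1" for y
  proof -
    obtain j where j: "j < n" "\<rho> j 1 = 1" "Z j y \<ge> 1" using one_iff y unfolding L1_def by auto
    have "\<forall>k::nat. \<exists>z. z \<in> tuples m UNIV \<and> \<Phi> j z = y \<and> P z > 1 - 1/(real k + 2)"
    proof
      fix k :: nat
      have a0: "1 - 1/(real k + 2) \<ge> 0" by (simp add: field_simps)
      have "Z j y > 1 - 1/(real k + 2)" using j(3) by (smt (verit) divide_pos_pos of_nat_0_le_iff)
      then have "\<exists>z\<in>tuples m UNIV. \<Phi> j z = y \<and> P z > 1 - 1/(real k + 2)"
        using zadeh_gt[OF Pb1 a0, of "\<Phi> j" y] unfolding Z_def by simp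
      then show "\<exists>z. z \<in> tuples m UNIV \<and> \<Phi> j z = y \<and> P z > 1 - 1/(real k + 2)"
        by blast
    qed
    then obtain zs where zs: "\<forall>k. zs k \<in> tuples m UNIV \<and> \<Phi> j (zs k) = y \<and> P (zs k) > 1 - 1/(real k + 2)"
      by metis
    have comp: "u (zs k i) > 1 - 1/(real k + 2)" if "i < m" for k i
      using zs that unfolding P_def prod_gt[OF m] by blast
    have inK0: "zs k i \<in> K0" if "i < m" for k i
    proof -
      have "1/(real k + 2) \<le> 1/2" by (simp add: field_simps)
      then have "u (zs k i) > 0" using comp[OF that, of k] by linarith
      then show ?thesis using S0K0 unfolding S0_def by auto
    qed
    obtain r :: "nat \<Rightarrow> nat" and w where r: "strict_mono r" "w \<in> tuples m K0"
      "\<forall>i<m. (\<lambda>k. zs (r k) i) \<longlonglongrightarrow> w i"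
      using common_subseq[OF K0c', of m zs] inK0 by blast
    have wT: "w \<in> tuples m UNIV" using r(2) tuples_mono[of K0 UNIV m] by auto
    have "(\<lambda>k. \<Phi> j (zs (r k))) \<longlonglongrightarrow> \<Phi> j w"
      by (rule cont_seq[OF m, of "\<Phi> j"]) (use cont j wT zs r in auto)
    moreover have "(\<lambda>k. \<Phi> j (zs (r k))) = (\<lambda>k. y)" using zs by auto
    ultimately have wy: "\<Phi> j w = y" using LIMSEQ_unique tendsto_const by metis
    have wge: "u (w i) \<ge> 1" if i: "i < m" for i
    proof -
      have ge: "u (w i) \<ge> \<alpha>" if \<alpha>: "\<alpha> < 1" for \<alpha>
      proof -
        obtain N :: nat where N: "1/(1-\<alpha>) < real N" using reals_Archimedean2 by blast
        have ev: "eventually (\<lambda>k. zs (r k) i \<in> {x. u x \<ge> \<alpha>}) sequentially"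
          unfolding eventually_sequentially
        proof (intro exI allI impI)
          fix k assume "N \<le> k"
          then have "real N \<le> real (r k)" using seq_suble[OF r(1), of k] by simp
          then have "1/(1-\<alpha>) < real (r k) + 2" using N by simp
          then have "1 < (real (r k) + 2) * (1 - \<alpha>)" using \<alpha> by (simp add: field_simps)
          then have "1/(real (r k) + 2) < 1 - \<alpha>" by (simp add: field_simps)
          then show "zs (r k) i \<in> {x. u x \<ge> \<alpha>}" using comp[OF i, of "r k"] by simp
        qed
        have "w i \<in> {x. u x \<ge> \<alpha>}"
          by (rule Lim_in_closed_set[OF usc_closed[OF us] ev]) (use r(3) i in auto)
        then show ?thesis by simp
      qed
      show ?thesis
      proof (rule ccontr)
        assume "\<not> u (w i) \<ge> 1"
        then show False using ge[of "(u (w i) + 1)/2"] by simp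
      qed
    qed
    have "w \<in> tuples m L1" using r(2) wge unfolding tuples_mem L1_def by auto
    then show ?thesis using j wy unfolding I_def by blast
  qed
  have L1eq: "L1 = (\<Union>j\<in>I. \<Phi> j ` tuples m L1)"
    using L1sup L1sub by blast
  have "x1 \<in> S0" using x1 unfolding S0_def by simp
  then have K0ne: "K0 \<noteq> {}" using S0K0 by blast
  have "x1 \<in> L1" using x1 unfolding L1_def by simp
  then have L1ne: "L1 \<noteq> {}" by blast
  have "gifs_attractor m {..<n} \<Phi> = K0"
    by (rule attr_eq[OF m _ K0c' K0ne K0eq]) (use matk in auto)
  moreover have "gifs_attractor m I \<Phi> = L1"
    by (rule attr_eq[OF m _ L1c L1ne L1eq]) (use matk in \<open>auto simp: I_def\<close>)
  ultimately show ?thesis using K0l L1l unfolding I_def by simp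
qed

end
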